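(* Let $\beta\in B_3$ be conjugate to $\sigma_2^{-a_k}\sigma_1\cdots\sigma_2^{-a_1}\sigma_1\Delta^{2d}$, where $k\ge1$, $d\in\mathbb{Z}$, all $a_i\geq0$ and at least one $a_i\neq0$. Then both eigenvalues of $\rho(\beta)$ lie in $\mathbb{E}$. Furthermore, the eigenvalues of $\rho(\beta)$ (1) are both positive in $(\mathbb{E},Q)$ if $k$ and $a_1+\cdots+a_k$ are both even; (2) are both negative if $k$ and $a_1-\cdots-a_k$ are both odd; and (3) have opposite signs if $k-a_1-\cdots-a_k$ is odd.
   Context: $B_3$ is the braid group generated by $\sigma_1,\sigma_2$, and $\Delta=(\sigma_1\sigma_2\sigma_1)^2$. The reduced Burau representation $\rho:B_3\to\mathrm{GL}_2(\mathbb{Z}[t^{\pm1}])$ is the homomorphism with $\rho(\sigma_1)=\begin{pmatrix}-t&0\\1&1\end{pmatrix}$, $\rho(\sigma_2)=\begin{pmatrix}1&t\\0&-t\end{pmatrix}$. $\mathbb{E}=\bigcup_{n\ge1}\mathbb{R}((t^{1/n}))$ is the field of Puiseux series over $\mathbb{R}$, containing $\mathbb{Z}[t^{\pm1}]$, with the ordering whose positive cone $Q$ consists of the nonzero series whose lowest-exponent nonzero coefficient is positive. *)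

theory Defs
  imports "HOL-Computational_Algebra.Formal_Laurent_Series" "Jordan_Normal_Form.Char_Poly"
begin

text \<open>Letters: sigma_1, sigma_2 and their inverses. A braid in B_3 is represented by a word;
  two words represent the same braid iff they are related by braid_eq.\<close>

datatype letter = S1 | S2 | S1inv | S2inv

fun inv_letter :: "letter \<Rightarrow> letter" where
  "inv_letter S1 = S1inv" | "inv_letter S2 = S2inv"
| "inv_letter S1inv = S1" | "inv_letter S2inv = S2"

definition inv_word :: "letter list \<Rightarrow> letter list" where
  "inv_word w = rev (map inv_letter w)"

inductive relator :: "letter list \<Rightarrow> letter list \<Rightarrow> bool" where
  "relator [S1, S1inv] []" | "relator [S1inv, S1] []"
| "relator [S2, S2inv] []" | "relator [S2inv, S2] []"
| "relator [S1, S2, S1] [S2, S1, S2]"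

inductive braid_eq :: "letter list \<Rightarrow> letter list \<Rightarrow> bool" where
  rel: "relator l r \<Longrightarrow> braid_eq (u @ l @ v) (u @ r @ v)"
| refl: "braid_eq w w"
| sym: "braid_eq w w' \<Longrightarrow> braid_eq w' w"
| trans: "braid_eq w w' \<Longrightarrow> braid_eq w' w'' \<Longrightarrow> braid_eq w w''"

definition word_pow :: "letter list \<Rightarrow> int \<Rightarrow> letter list" where
  "word_pow w d = (if d \<ge> 0 then concat (replicate (nat d) w)
                   else concat (replicate (nat (- d)) (inv_word w)))"

definition Delta_word :: "letter list" where
  "Delta_word = [S1, S2, S1, S1, S2, S1]"

definition normal_word :: "nat \<Rightarrow> (nat \<Rightarrow> nat) \<Rightarrow> int \<Rightarrow> letter list" where
  "normal_word k a d =
     concat (map (\<lambda>i. replicate (a i) S2inv @ [S1]) (rev [1..<k+1])) @ word_pow Delta_word (2 * d)"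

text \<open>Matrices are over a commutative ring containing an element t together with its
  inverse tinv (t * tinv = 1); for Z[t^{+-1}] inside the Puiseux field these are t and t^{-1}.\<close>
fun burau_letter :: "'a::comm_ring_1 \<Rightarrow> 'a \<Rightarrow> letter \<Rightarrow> 'a mat" where
  "burau_letter t ti S1 = mat_of_rows_list 2 [[- t, 0], [1, 1]]"
| "burau_letter t ti S2 = mat_of_rows_list 2 [[1, t], [0, - t]]"
| "burau_letter t ti S1inv = mat_of_rows_list 2 [[- ti, 0], [ti, 1]]"
| "burau_letter t ti S2inv = mat_of_rows_list 2 [[1, 1], [0, - ti]]"

definition burau :: "'a::comm_ring_1 \<Rightarrow> 'a \<Rightarrow> letter list \<Rightarrow> 'a mat" where
  "burau t ti w = foldr (\<lambda>l M. burau_letter t ti l * M) w (1\<^sub>m 2)"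

text \<open>The Puiseux field E is the union over n \<ge> 1 of R((t^(1/n))). We identify R((t^(1/n)))
  with the Laurent series field (real fls) in the variable s = t^(1/n); the inclusion
  Z[t^{+-1}] \<subseteq> R((t^(1/n))) sends t to s^n.\<close>

definition rho_E :: "nat \<Rightarrow> letter list \<Rightarrow> real fls mat" where
  "rho_E n w = burau (fls_X ^ n) (fls_X_inv ^ n) w"

text \<open>Positive cone Q: nonzero series whose lowest-exponent nonzero coefficient is positive.
  (Independent of the chosen n, since reindexing s = u^m preserves lowest coefficients.)\<close>
definition Q_pos :: "real fls \<Rightarrow> bool" where
  "Q_pos f \<longleftrightarrow> f \<noteq> 0 \<and> fls_nth f (fls_subdegree f) > 0"

definition Q_neg :: "real fls \<Rightarrow> bool" where
  "Q_neg f \<longleftrightarrow> Q_pos (- f)"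

end

theory Submission imports Defs begin
definition mat2 :: "'a \<Rightarrow> 'a \<Rightarrow> 'a \<Rightarrow> 'a \<Rightarrow> 'a::comm_ring_1 mat" where
  "mat2 a b c d = mat_of_rows_list 2 [[a,b],[c,d]]"
lemma mat2_dims[simp]: "dim_row (mat2 a b c d) = 2" "dim_col (mat2 a b c d) = 2"
  unfolding mat2_def mat_of_rows_list_def by simp_all
lemma mat2_carrier[simp]: "mat2 a b c d \<in> carrier_mat 2 2"
  unfolding mat2_def mat_of_rows_list_def carrier_mat_def by simp
lemma mat2_index[simp]: "mat2 a b c d $$ (0,0) = a" "mat2 a b c d $$ (0,Suc 0) = b"
   "mat2 a b c d $$ (Suc 0,0) = c" "mat2 a b c d $$ (Suc 0,Suc 0) = d"
  unfolding mat2_def mat_of_rows_list_def by simp_all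
lemma less2: "(i::nat) < 2 \<longleftrightarrow> i = 0 \<or> i = Suc 0" by auto
lemma mat2_eq: assumes "A \<in> carrier_mat 2 2" shows "A = mat2 (A $$ (0,0)) (A $$ (0,1)) (A $$ (1,0)) (A $$ (1,1))"
  apply (rule eq_matI)
  using assms apply (simp_all add: less2)
  apply auto
  done
lemma sum2: "(\<Sum>i\<in>{0..<2}. f i) = f (0::nat) + f 1"
  by (simp add: eval_nat_numeral)
lemma mat2_mult: "mat2 a b c d * mat2 e f g h = mat2 (a*e+b*g) (a*f+b*h) (c*e+d*g) (c*f+d*h)"
  apply (rule eq_matI)
  apply (simp_all add: less2)
  apply (elim disjE; simp add: scalar_prod_def sum2)
  done
lemma mat2_one: "1\<^sub>m 2 = mat2 1 0 0 1"
  by (rule eq_matI) (auto simp: less2)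
lemma det1: "(A :: 'a :: comm_ring_1 mat) \<in> carrier_mat 1 1 \<Longrightarrow> det A = A $$ (0,0)"
  apply (subst laplace_expansion_column[of A 1 0])
  apply (auto simp: cofactor_def)
  apply (subst det_dim_zero)
  apply (auto simp: mat_delete_def)
  done

lemma det2: assumes "(A :: 'a :: comm_ring_1 mat) \<in> carrier_mat 2 2"
  shows "det A = A $$ (0,0) * A $$ (1,1) - A $$ (0,1) * A $$ (1,0)"
  apply (subst laplace_expansion_column[OF assms, of 0])
  using assms apply (auto simp: cofactor_def numeral_2_eq_2 lessThan_Suc)
  apply (subst (1 2) det1)
  apply (auto simp: mat_delete_def insert_index_def)
  done

lemma mat2_det: "det (mat2 a b c d) = a*d - b*c"
  by (simp add: det2)

lemma mat2_char_poly: "char_poly (mat2 a b c d) = [: a*d - b*c, -(a+d), 1:]"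
proof -
  have "char_poly (mat2 a b c d) = det (mat2 ([:0,1:] + [:-a:]) [:-b:] [:-c:] ([:0,1:] + [:-d:]))"
    unfolding char_poly_def
    by (rule arg_cong[where f=det], rule eq_matI) (auto simp: char_poly_matrix_def less2)
  also have "\<dots> = [: a*d - b*c, -(a+d), 1:]"
    by (simp add: mat2_det algebra_simps)
  finally show ?thesis .
qed

lemma burau_letter_mat2:
  "burau_letter t ti S1 = mat2 (-t) 0 1 1" "burau_letter t ti S2 = mat2 1 t 0 (-t)"
  "burau_letter t ti S1inv = mat2 (-ti) 0 ti 1" "burau_letter t ti S2inv = mat2 1 1 0 (-ti)"
  by (simp_all add: mat2_def)

declare burau_letter.simps[simp del]
declare burau_letter_mat2[simp]

lemma mat2_eq_iff: "mat2 a b c d = mat2 e f g h \<longleftrightarrow> a = e \<and> b = f \<and> c = g \<and> d = h"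
  by (metis mat2_index)

lemma burau_letter_carrier[simp]: "burau_letter t ti l \<in> carrier_mat 2 2"
  by (cases l) (simp_all add: burau_letter_mat2)

lemma burau_Nil[simp]: "burau t ti [] = 1\<^sub>m 2"
  by (simp add: burau_def)

lemma burau_Cons[simp]: "burau t ti (l # w) = burau_letter t ti l * burau t ti w"
  by (simp add: burau_def)

lemma burau_carrier[simp]: "burau t ti w \<in> carrier_mat 2 2"
  by (induction w) (auto intro!: mult_carrier_mat[of _ 2 2 _ 2])

lemma burau_dim[simp]: "dim_row (burau t ti w) = 2" "dim_col (burau t ti w) = 2"
  by (rule carrier_matD[OF burau_carrier])+

lemma mult2_carrier[simp]: "A \<in> carrier_mat 2 2 \<Longrightarrow> B \<in> carrier_mat 2 2 \<Longrightarrow> A * B \<in> carrier_mat 2 2"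
  by (rule mult_carrier_mat)

lemma assoc2: "A \<in> carrier_mat 2 2 \<Longrightarrow> B \<in> carrier_mat 2 2 \<Longrightarrow> C \<in> carrier_mat 2 2 \<Longrightarrow> A * B * C = A * (B * C)"
  by (rule assoc_mult_mat)

lemma burau_append: "burau t ti (u @ v) = burau t ti u * burau t ti v"
proof (induction u)
  case Nil then show ?case by (simp add: left_mult_one_mat[of _ 2 2])
next
  case (Cons l u)
  then show ?case
    by (simp add: assoc2)
qed

lemma burau_relator:
  assumes "t * ti = 1" "relator l r"
  shows "burau t ti l = burau t ti r"
proof -
  have e: "ti * t = 1" using assms(1) by (simp add: mult.commute)
  show ?thesis using assms(2)
    by cases (simp_all add: mat2_mult mat2_one mat2_eq_iff assms(1) e algebra_simps)
qed

lemma braid_eq_burau: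
  assumes "t * ti = 1" "braid_eq w w'"
  shows "burau t ti w = burau t ti w'"
  using assms(2)
  by induction (simp_all add: burau_append burau_relator[OF assms(1)])

lemma inv_word_Cons: "inv_word (l # g) = inv_word g @ [inv_letter l]"
  by (simp add: inv_word_def)

lemma letter_inv:
  assumes "t * ti = 1"
  shows "burau_letter t ti (inv_letter l) * burau_letter t ti l = 1\<^sub>m 2"
    "burau_letter t ti l * burau_letter t ti (inv_letter l) = 1\<^sub>m 2"
proof -
  have e: "ti * t = 1" using assms(1) by (simp add: mult.commute)
  show "burau_letter t ti (inv_letter l) * burau_letter t ti l = 1\<^sub>m 2"
    "burau_letter t ti l * burau_letter t ti (inv_letter l) = 1\<^sub>m 2"
    by (cases l; simp add: mat2_mult mat2_one mat2_eq_iff assms(1) e)+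
qed

lemma burau_inv:
  assumes "t * ti = 1"
  shows "burau t ti (inv_word g) * burau t ti g = 1\<^sub>m 2 \<and> burau t ti g * burau t ti (inv_word g) = 1\<^sub>m 2"
proof (induction g)
  case Nil then show ?case by (simp add: inv_word_def)
next
  case (Cons l g)
  let ?I = "burau t ti (inv_word g)" and ?G = "burau t ti g"
  let ?L = "burau_letter t ti l" and ?K = "burau_letter t ti (inv_letter l)"
  have c: "?I \<in> carrier_mat 2 2" "?G \<in> carrier_mat 2 2" "?L \<in> carrier_mat 2 2" "?K \<in> carrier_mat 2 2"
    by auto
  have "burau t ti (inv_word (l # g)) * burau t ti (l # g) = ?I * (?K * ?L) * ?G"
    by (simp add: inv_word_Cons burau_append c assoc2 right_mult_one_mat[of _ 2 2])
  also have "\<dots> = 1\<^sub>m 2" using Cons letter_inv[OF assms] c by (simp add: right_mult_one_mat[of _ 2 2])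
  finally have 1: "burau t ti (inv_word (l # g)) * burau t ti (l # g) = 1\<^sub>m 2" .
  have "burau t ti (l # g) * burau t ti (inv_word (l # g)) = ?L * (?G * ?I) * ?K"
    by (simp add: inv_word_Cons burau_append c assoc2 right_mult_one_mat[of _ 2 2])
  also have "\<dots> = 1\<^sub>m 2" using Cons letter_inv[OF assms] c by (simp add: right_mult_one_mat[of _ 2 2])
  finally show ?case using 1 by simp
qed

lemma char_poly_conj:
  assumes "t * ti = 1"
  shows "char_poly (burau t ti (g @ w @ inv_word g)) = char_poly (burau t ti w)"
proof -
  have "similar_mat (burau t ti (g @ w @ inv_word g)) (burau t ti w)"
    unfolding similar_mat_def similar_mat_wit_def
    apply (rule exI[of _ "burau t ti g"], rule exI[of _ "burau t ti (inv_word g)"])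
    using burau_inv[OF assms, of g]
    by (auto simp: burau_append assoc2 Let_def)
  then show ?thesis by (rule char_poly_similar)
qed


definition bigO :: "int \<Rightarrow> real fls \<Rightarrow> bool" where
  "bigO m f \<longleftrightarrow> (\<forall>n < -m. fls_nth f n = 0)"

definition lc :: "real fls \<Rightarrow> real" where "lc f = fls_nth f (fls_subdegree f)"

lemma bigO_iff: "bigO m f \<longleftrightarrow> f = 0 \<or> -m \<le> fls_subdegree f"
proof
  assume "bigO m f" then show "f = 0 \<or> -m \<le> fls_subdegree f"
    unfolding bigO_def by (auto intro: fls_subdegree_geI)
next
  assume "f = 0 \<or> -m \<le> fls_subdegree f" then show "bigO m f"
    unfolding bigO_def by auto
qed

lemma bigO_add: "bigO m f \<Longrightarrow> bigO m g \<Longrightarrow> bigO m (f + g)"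
  by (simp add: bigO_def)
lemma bigO_diff: "bigO m f \<Longrightarrow> bigO m g \<Longrightarrow> bigO m (f - g)"
  by (simp add: bigO_def)
lemma bigO_uminus: "bigO m f \<Longrightarrow> bigO m (- f)"
  by (simp add: bigO_def)
lemma bigO_mono: "bigO m f \<Longrightarrow> m \<le> m' \<Longrightarrow> bigO m' f"
  by (simp add: bigO_def)
lemma bigO_zero[simp]: "bigO m 0"
  by (simp add: bigO_def)
lemma bigO_mult: "bigO m f \<Longrightarrow> bigO m' g \<Longrightarrow> bigO (m + m') (f * g)"
  unfolding bigO_iff by (cases "f = 0"; cases "g = 0") auto
lemma bigO_mult': "bigO m f \<Longrightarrow> bigO m' g \<Longrightarrow> m + m' \<le> m'' \<Longrightarrow> bigO m'' (f * g)"
  using bigO_mult bigO_mono by blast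
lemma bigO_one: "bigO 0 1" by (simp add: bigO_def)
lemma bigO_const: "bigO 0 (fls_const c)" by (simp add: bigO_def)
lemma bigO_tX: "bigO (-1) (fls_X :: real fls)" by (simp add: bigO_def)
lemma bigO_wX: "bigO 1 (fls_X_inv :: real fls)" by (simp add: bigO_def)
lemma bigO_pow: "bigO m f \<Longrightarrow> bigO (int n * m) (f ^ n)"
proof (induction n)
  case 0 then show ?case by (simp add: bigO_one)
next
  case (Suc n)
  then have "bigO (m + int n * m) (f * f ^ n)" by (intro bigO_mult) auto
  then show ?case by (simp add: algebra_simps)
qed

lemma lc_mult: "f \<noteq> 0 \<Longrightarrow> g \<noteq> 0 \<Longrightarrow> lc (f * g) = lc f * lc g"
  by (simp add: lc_def)

lemma lc_pow: "(f::real fls) \<noteq> 0 \<Longrightarrow> lc (f ^ n) = lc f ^ n \<and> fls_subdegree (f ^ n) = int n * fls_subdegree f"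
proof (induction n)
  case 0 then show ?case by (simp add: lc_def)
next
  case (Suc n)
  have "f ^ n \<noteq> 0" using Suc.prems by simp
  then show ?case using Suc by (simp add: lc_mult algebra_simps)
qed

lemma Q_pos_iff: "Q_pos f \<longleftrightarrow> f \<noteq> 0 \<and> lc f > 0"
  by (simp add: Q_pos_def lc_def)
lemma Q_neg_iff: "Q_neg f \<longleftrightarrow> f \<noteq> 0 \<and> lc f < 0"
  by (auto simp add: Q_neg_def Q_pos_def lc_def)

lemma lead:
  assumes "bigO (m - 1) (f - g)" "g \<noteq> 0" "fls_subdegree g = - m"
  shows "f \<noteq> 0 \<and> fls_subdegree f = - m \<and> lc f = lc g"
proof -
  have lo: "fls_nth f n = 0" if "n < - m" for n
  proof -
    have "fls_nth (f - g) n = 0" using assms(1) that unfolding bigO_def by auto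
    moreover have "fls_nth g n = 0" using that assms(3) by simp
    ultimately show ?thesis by simp
  qed
  have "fls_nth (f - g) (-m) = 0" using assms(1) unfolding bigO_def by auto
  then have e: "fls_nth f (-m) = fls_nth g (-m)" by simp
  have nz: "fls_nth g (-m) \<noteq> 0" using assms(2,3) nth_fls_subdegree_nonzero by fastforce
  have "fls_subdegree f = -m" using e nz lo by (intro fls_subdegree_eqI) auto
  moreover have "f \<noteq> 0" using e nz by auto
  ultimately show ?thesis using e assms(3) by (simp add: lc_def)
qed

lemma tw: "(fls_X :: real fls) * fls_X_inv = 1"
  by (simp add: fls_X_times_conv_shift)

lemma sqrt_exists:
  fixes D :: "real fls"
  assumes "bigO (2 * int S - 1) (D - fls_X_inv ^ (2 * S))"
  shows "\<exists>s. s * s = D \<and> bigO (int S - 1) (s - fls_X_inv ^ S)"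
proof -
  define F where "F = fls_X ^ (2 * S) * D"
  have tw2: "(fls_X :: real fls) ^ (2*S) * fls_X_inv ^ (2*S) = 1"
    by (metis power_mult_distrib power_one tw)
  have "F - 1 = fls_X ^ (2 * S) * (D - fls_X_inv ^ (2 * S))"
    unfolding F_def by (simp only: right_diff_distrib tw2)
  moreover have "bigO (- int (2 * S)) ((fls_X :: real fls) ^ (2 * S))"
    using bigO_pow[OF bigO_tX, of "2 * S"] by simp
  ultimately have F1: "bigO (-1) (F - 1)"
    using bigO_mult[OF _ assms] by fastforce
  have Fneg: "fls_nth F n = 0" if "n < 0" for n
  proof -
    have "fls_nth (F - 1) n = 0" using F1 that unfolding bigO_def by auto
    then show ?thesis using that by simp
  qed
  have F0: "fls_nth F 0 = 1"
  proof -
    have "fls_nth (F - 1) 0 = 0" using F1 unfolding bigO_def by auto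
    then show ?thesis by simp
  qed
  define f where "f = fls_regpart F"
  have Ff: "F = fps_to_fls f"
    unfolding f_def using Fneg by (intro fls_regpart_to_fls_trivial[symmetric] fls_subdegree_ge0I) auto
  have f0: "fps_nth f 0 = 1" using F0 unfolding f_def by simp
  define g where "g = fps_radical (\<lambda>_ _. 1) (Suc 1) f"
  have g2: "g ^ Suc 1 = f"
    unfolding g_def using power_radical[of f "\<lambda>_ _. 1" 1] f0 by simp
  have g0: "fps_nth g 0 = 1" unfolding g_def by simp
  define G where "G = fps_to_fls g"
  have "fps_to_fls (g ^ Suc 1) = G ^ Suc 1" unfolding G_def
    by (simp only: fps_to_fls_power)
  then have "G * G = fps_to_fls (g ^ Suc 1)" by simp
  then have GG: "G * G = F" using g2 Ff by simp
  have G1: "bigO (-1) (G - 1)"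
    unfolding bigO_def G_def using g0 by auto
  define s where "s = fls_X_inv ^ S * G"
  have WW: "(fls_X_inv :: real fls) ^ S * fls_X_inv ^ S = fls_X_inv ^ (2 * S)"
    by (simp only: power_add[symmetric] mult_2)
  have "s * s = (fls_X_inv ^ S * fls_X_inv ^ S) * (G * G)"
    unfolding s_def by (simp only: mult_ac)
  also have "\<dots> = (fls_X ^ (2 * S) * fls_X_inv ^ (2*S)) * D"
    unfolding WW GG F_def by (simp only: mult_ac)
  also have "\<dots> = D" by (simp only: tw2 mult_1_left)
  finally have 1: "s * s = D" .
  have "s - fls_X_inv ^ S = fls_X_inv ^ S * (G - 1)"
    unfolding s_def by (simp add: right_diff_distrib)
  moreover have "bigO (int S) ((fls_X_inv :: real fls) ^ S)"
    using bigO_pow[OF bigO_wX, of S] by simp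
  ultimately have "bigO (int S - 1) (s - fls_X_inv ^ S)"
    using bigO_mult[OF _ G1] by fastforce
  with 1 show ?thesis by blast
qed




fun xs :: "nat \<Rightarrow> real fls" where
  "xs 0 = 0"
| "xs (Suc a) = xs a + (- fls_X_inv) ^ a"

abbreviation tX :: "real fls" where "tX \<equiv> fls_X"
abbreviation wX :: "real fls" where "wX \<equiv> fls_X_inv"
abbreviation uX :: "real fls" where "uX \<equiv> - fls_X_inv"

lemma burau_S2inv_pow: "burau tX wX (replicate a S2inv) = mat2 1 (xs a) 0 (uX ^ a)"
  by (induction a) (simp_all add: mat2_one mat2_mult algebra_simps)

definition Amat :: "nat \<Rightarrow> real fls mat" where
  "Amat a = mat2 (xs a - tX) (xs a) (uX ^ a) (uX ^ a)"

lemma burau_A: "burau tX wX (replicate a S2inv @ [S1]) = Amat a"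
  by (simp add: burau_append burau_S2inv_pow Amat_def mat2_one mat2_mult)

lemma bigO_uX: "bigO 1 uX" by (simp add: bigO_def)

lemma bigO_uX_pow: "bigO (int n) (uX ^ n)"
  using bigO_pow[OF bigO_uX, of n] by simp

lemma bigO_xs: "bigO (int a - 1) (xs a)"
proof (induction a)
  case 0 then show ?case by simp
next
  case (Suc a)
  have "bigO (int a) (xs a)" using Suc bigO_mono by fastforce
  then show ?case using bigO_uX_pow[of a] by (simp add: bigO_add)
qed

lemma step_scalar:
  assumes c: "bigO (int S - 1) (p + r - uX ^ S)" and p: "bigO (int S) p"
  shows "bigO (int (S + a) - 1) (((xs a - tX) * p + xs a * r) + (uX ^ a * p + uX ^ a * r) - uX ^ (S + a))"
    and "bigO (int (S + a) - 1) ((xs a - tX) * p + xs a * r)"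
proof -
  define c where "c = p + r - uX ^ S"
  have e1: "((xs a - tX) * p + xs a * r) + (uX ^ a * p + uX ^ a * r) - uX ^ (S + a)
     = xs a * c + xs a * uX ^ S - tX * p + uX ^ a * c"
    unfolding c_def by (simp add: algebra_simps power_add)
  have e2: "(xs a - tX) * p + xs a * r = xs a * c + xs a * uX ^ S - tX * p"
    unfolding c_def by (simp add: algebra_simps)
  have c': "bigO (int S - 1) c" using c unfolding c_def .
  have b1: "bigO (int (S + a) - 1) (xs a * c)"
    by (rule bigO_mult'[OF bigO_xs c']) simp
  have b2: "bigO (int (S + a) - 1) (xs a * uX ^ S)"
    by (rule bigO_mult'[OF bigO_xs bigO_uX_pow]) simp
  have b3: "bigO (int (S + a) - 1) (tX * p)"
    by (rule bigO_mult'[OF bigO_tX p]) simp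
  have b4: "bigO (int (S + a) - 1) (uX ^ a * c)"
    by (rule bigO_mult'[OF bigO_uX_pow c']) simp
  show "bigO (int (S + a) - 1) (((xs a - tX) * p + xs a * r) + (uX ^ a * p + uX ^ a * r) - uX ^ (S + a))"
    unfolding e1 by (intro bigO_add bigO_diff b1 b2 b3 b4)
  show "bigO (int (S + a) - 1) ((xs a - tX) * p + xs a * r)"
    unfolding e2 by (intro bigO_add bigO_diff b1 b2 b3)
qed

definition Inv :: "real fls mat \<Rightarrow> nat \<Rightarrow> bool" where
  "Inv P S \<longleftrightarrow> (\<forall>j\<in>{0, 1}. bigO (int S - 1) (P $$ (0,j) + P $$ (1,j) - uX ^ S) \<and> bigO (int S) (P $$ (0,j)))"

definition Jnv :: "real fls mat \<Rightarrow> nat \<Rightarrow> bool" where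
  "Jnv P S \<longleftrightarrow> (\<forall>j\<in>{0, 1}. bigO (int S - 1) (P $$ (0,j) + P $$ (1,j) - uX ^ S) \<and> bigO (int S - 1) (P $$ (0,j)))"

lemma Jnv_Inv: "Jnv P S \<Longrightarrow> Inv P S"
  unfolding Jnv_def Inv_def using bigO_mono by fastforce

lemma step:
  assumes "P \<in> carrier_mat 2 2" "Inv P S"
  shows "Jnv (Amat a * P) (S + a)"
proof -
  have P: "P = mat2 (P $$ (0,0)) (P $$ (0,1)) (P $$ (1,0)) (P $$ (1,1))"
    using assms(1) by (rule mat2_eq)
  have i0: "bigO (int S - 1) (P $$ (0,0) + P $$ (1,0) - uX ^ S)" "bigO (int S) (P $$ (0,0))"
    using assms(2) unfolding Inv_def by auto
  have i1: "bigO (int S - 1) (P $$ (0,1) + P $$ (1,1) - uX ^ S)" "bigO (int S) (P $$ (0,1))"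
    using assms(2) unfolding Inv_def by auto
  show ?thesis
    apply (subst P)
    unfolding Jnv_def Amat_def mat2_mult
    using step_scalar[OF i0, of a] step_scalar[OF i1, of a]
    by simp
qed


definition Pm :: "(nat \<Rightarrow> nat) \<Rightarrow> nat \<Rightarrow> real fls mat" where
  "Pm a k = burau tX wX (concat (map (\<lambda>i. replicate (a i) S2inv @ [S1]) (rev [1..<k+1])))"

lemma Pm_0: "Pm a 0 = 1\<^sub>m 2" by (simp add: Pm_def)

lemma Pm_Suc: "Pm a (Suc k) = Amat (a (Suc k)) * Pm a k"
proof -
  have r: "rev [1..<Suc k + 1] = Suc k # rev [1..<k+1]" by simp
  show ?thesis unfolding Pm_def r list.map concat.simps
    by (rule HOL.trans[OF burau_append], simp only: burau_A)
qed

lemma Pm_carrier: "Pm a k \<in> carrier_mat 2 2"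
  by (simp add: Pm_def)

lemma Inv_one: "Inv (1\<^sub>m 2) 0"
  unfolding Inv_def mat2_one by (simp add: bigO_one)

lemma Pm_Inv: "Inv (Pm a k) (\<Sum>i=1..k. a i)"
proof (induction k)
  case 0 then show ?case by (simp add: Pm_0 Inv_one)
next
  case (Suc k)
  then show ?case
    using step[OF Pm_carrier Suc, of "a (Suc k)"] Jnv_Inv by (simp add: Pm_Suc)
qed

lemma Pm_Jnv: "Jnv (Pm a (Suc k)) (\<Sum>i=1..Suc k. a i)"
  using step[OF Pm_carrier[of a k] Pm_Inv[of a k], of "a (Suc k)"] by (simp add: Pm_Suc)

lemma Pm_trace:
  assumes "k \<ge> 1"
  shows "bigO (int (\<Sum>i=1..k. a i) - 1) (Pm a k $$ (0,0) + Pm a k $$ (1,1) - uX ^ (\<Sum>i=1..k. a i))"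
proof -
  obtain k' where k: "k = Suc k'" using assms by (cases k) auto
  define S where "S = (\<Sum>i=1..k. a i)"
  define P where "P = Pm a k"
  have J: "Jnv P S" unfolding P_def S_def k by (rule Pm_Jnv)
  have "P $$ (0,0) + P $$ (1,1) - uX ^ S = P $$ (0,0) - P $$ (0,1) + (P $$ (0,1) + P $$ (1,1) - uX ^ S)"
    by (simp add: algebra_simps)
  moreover have "bigO (int S - 1) \<dots>"
  proof -
    have j: "bigO (int S - 1) (P $$ (0,0))" "bigO (int S - 1) (P $$ (0,1))"
       "bigO (int S - 1) (P $$ (0,1) + P $$ (1,1) - uX ^ S)"
      using J unfolding Jnv_def by auto
    show ?thesis by (rule bigO_add[OF bigO_diff[OF j(1) j(2)] j(3)])
  qed
  ultimately have "bigO (int S - 1) (P $$ (0,0) + P $$ (1,1) - uX ^ S)" by metis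
  then show ?thesis unfolding P_def S_def .
qed

lemma det_Amat: "det (Amat a) = - tX * uX ^ a"
  by (simp add: Amat_def mat2_det algebra_simps)

lemma Pm_det: "det (Pm a k) = (- tX) ^ k * uX ^ (\<Sum>i=1..k. a i)"
proof (induction k)
  case 0 then show ?case by (simp add: Pm_0 mat2_one mat2_det)
next
  case (Suc k)
  have "det (Pm a (Suc k)) = det (Amat (a (Suc k))) * det (Pm a k)"
    unfolding Pm_Suc by (rule det_mult[of _ 2]) (auto simp: Amat_def Pm_carrier)
  then show ?case using Suc by (simp add: det_Amat power_add algebra_simps)
qed

lemma burau_Delta: "burau t ti Delta_word = mat2 (t^3) 0 0 (t^3)"
  by (simp add: Delta_word_def mat2_one mat2_mult algebra_simps eval_nat_numeral)

lemma burau_inv_Delta: "burau t ti (inv_word Delta_word) = mat2 (ti^3) 0 0 (ti^3)"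
  by (simp add: Delta_word_def inv_word_def mat2_one mat2_mult algebra_simps eval_nat_numeral)

lemma burau_concat_rep:
  assumes "burau t ti w = mat2 z 0 0 z"
  shows "burau t ti (concat (replicate n w)) = mat2 (z ^ n) 0 0 (z ^ n)"
  by (induction n) (simp_all add: burau_append assms mat2_one mat2_mult)

lemma burau_word_pow:
  "\<exists>z. burau tX wX (word_pow Delta_word (2 * d)) = mat2 z 0 0 z \<and> z \<noteq> 0 \<and> lc z = 1"
proof (cases "2 * d \<ge> 0")
  case True
  have "tX ^ 3 \<noteq> 0" by simp
  then show ?thesis using True lc_pow[of "tX ^ 3" "nat (2 * d)"] lc_pow[of tX 3]
    by (auto simp: word_pow_def burau_concat_rep[OF burau_Delta] lc_def)
next
  case False
  have "wX ^ 3 \<noteq> 0" by simp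
  then show ?thesis using False lc_pow[of "wX ^ 3" "nat (- (2 * d))"] lc_pow[of wX 3]
    by (auto simp: word_pow_def burau_concat_rep[OF burau_inv_Delta] lc_def)
qed


lemma lin_fac: "[:-x1, 1:] * [:-x2, 1:] = [: x1 * x2, -(x1 + x2), (1::'a::comm_ring_1) :]"
  by (simp add: algebra_simps)

lemma bigO_numeral: "bigO 0 (numeral n :: real fls)"
  unfolding bigO_iff by simp

lemma bigO_half: "bigO m f \<Longrightarrow> bigO m (f / (2 :: real fls))"
proof -
  assume h: "bigO m f"
  show ?thesis
  proof (cases "f = 0")
    case True then show ?thesis by simp
  next
    case False
    have nz: "f / 2 \<noteq> 0" using False by simp
    have "f = (f / 2) * 2" by simp
    then have "fls_subdegree f = fls_subdegree (f / 2)"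
      using nz by (metis add.right_neutral fls_subdegree_mult fls_subdegree_numeral zero_neq_numeral)
    then show ?thesis using h False unfolding bigO_iff by simp
  qed
qed

lemma wpow_props: "wX ^ S \<noteq> 0 \<and> fls_subdegree (wX ^ S) = - int S \<and> lc (wX ^ S) = 1"
  by (simp add: lc_def)

lemma mwpow_props: "- (wX ^ S) \<noteq> 0 \<and> fls_subdegree (- (wX ^ S)) = - int S \<and> lc (- (wX ^ S)) = -1"
  by (simp add: lc_def)

lemma lc_mtX: "lc (- tX) = -1" by (simp add: lc_def)
lemma lc_uX: "lc uX = -1" by (simp add: lc_def)

theorem mainTheorem13:
  fixes k :: nat and a :: "nat \<Rightarrow> nat" and d :: int and g beta :: "letter list"
  assumes "k \<ge> 1"
    and "\<exists>i\<in>{1..k}. a i \<noteq> 0"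
    and "braid_eq beta (g @ normal_word k a d @ inv_word g)"
  shows "\<exists>n>0. \<exists>x1 x2 :: real fls.
     char_poly (rho_E n beta) = [:- x1, 1:] * [:- x2, 1:]
     \<and> (even k \<and> even (\<Sum>i=1..k. a i) \<longrightarrow> Q_pos x1 \<and> Q_pos x2)
     \<and> (odd k \<and> odd (int (a 1) - (\<Sum>i=2..k. int (a i))) \<longrightarrow> Q_neg x1 \<and> Q_neg x2)
     \<and> (odd (int k - (\<Sum>i=1..k. int (a i))) \<longrightarrow>
          (Q_pos x1 \<and> Q_neg x2) \<or> (Q_neg x1 \<and> Q_pos x2))"
proof -
  define S where "S = (\<Sum>i=1..k. a i)"
  define P where "P = Pm a k"
  define T where "T = P $$ (0,0) + P $$ (1,1)"
  define dP where "dP = det P"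
  have Pc: "P \<in> carrier_mat 2 2" unfolding P_def by (rule Pm_carrier)
  have hT: "bigO (int S - 1) (T - uX ^ S)"
    using Pm_trace[OF assms(1), of a] unfolding T_def P_def S_def .
  have hdP: "dP = (- tX) ^ k * uX ^ S" unfolding dP_def P_def S_def by (rule Pm_det)
  obtain z where z: "burau tX wX (word_pow Delta_word (2 * d)) = mat2 z 0 0 z" "z \<noteq> 0" "lc z = 1"
    using burau_word_pow by blast
  have nw: "burau tX wX (normal_word k a d) = P * mat2 z 0 0 z"
    unfolding normal_word_def burau_append P_def Pm_def z(1) by simp
  have Pe: "P = mat2 (P $$ (0,0)) (P $$ (0,1)) (P $$ (1,0)) (P $$ (1,1))"
    using Pc by (rule mat2_eq)
  have dPe: "dP = P $$ (0,0) * P $$ (1,1) - P $$ (0,1) * P $$ (1,0)"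
    unfolding dP_def using Pc by (rule det2)
  have "rho_E 1 beta = burau tX wX beta" by (simp add: rho_E_def)
  also have "\<dots> = burau tX wX (g @ normal_word k a d @ inv_word g)"
    by (rule braid_eq_burau[OF tw assms(3)])
  finally have "char_poly (rho_E 1 beta) = char_poly (burau tX wX (normal_word k a d))"
    using char_poly_conj[OF tw] by simp
  also have "\<dots> = char_poly (P * mat2 z 0 0 z)" using nw by simp
  also have "P * mat2 z 0 0 z = mat2 (P $$ (0,0) * z) (P $$ (0,1) * z) (P $$ (1,0) * z) (P $$ (1,1) * z)"
    by (subst Pe) (simp add: mat2_mult)
  also have "char_poly \<dots> = [: z * z * dP, - (z * T), 1 :]"
    by (simp add: mat2_char_poly dPe T_def algebra_simps)
  finally have cp: "char_poly (rho_E 1 beta) = [: z * z * dP, - (z * T), 1 :]" .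

  define D where "D = T * T - 4 * dP"
  have uu: "uX ^ S * uX ^ S = wX ^ (2 * S)"
  proof -
    have "uX ^ S * uX ^ S = (uX * uX) ^ S" by (rule power_mult_distrib[symmetric])
    also have "uX * uX = wX * wX" by simp
    also have "(wX * wX) ^ S = wX ^ (2 * S)" by (simp only: power_mult_distrib power_add[symmetric] mult_2)
    finally show ?thesis .
  qed
  have hD: "bigO (2 * int S - 1) (D - wX ^ (2 * S))"
  proof -
    have e: "D - wX ^ (2 * S) = (T - uX ^ S) * ((T - uX ^ S) + (uX ^ S + uX ^ S)) - 4 * dP"
      unfolding D_def uu[symmetric] by (simp add: algebra_simps)
    have b1: "bigO (int S) ((T - uX ^ S) + (uX ^ S + uX ^ S))"
      using bigO_mono[OF hT, of "int S"] bigO_uX_pow[of S] by (intro bigO_add) auto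
    have b2: "bigO (2 * int S - 1) ((T - uX ^ S) * ((T - uX ^ S) + (uX ^ S + uX ^ S)))"
      by (rule bigO_mult'[OF hT b1]) simp
    have "bigO (- int k) ((- tX) ^ k)"
      using bigO_pow[OF bigO_uminus[OF bigO_tX], of k] by simp
    then have "bigO (int S - int k) dP" unfolding hdP
      using bigO_uX_pow[of S] by (intro bigO_mult') auto
    then have b3: "bigO (2 * int S - 1) (4 * dP)"
      using assms(1) by (intro bigO_mult'[OF bigO_numeral]) auto
    show ?thesis unfolding e by (rule bigO_diff[OF b2 b3])
  qed
  obtain s where s: "s * s = D" "bigO (int S - 1) (s - wX ^ S)"
    using sqrt_exists[OF hD] by blast
  define l1 where "l1 = (T + s) / 2"
  define l2 where "l2 = (T - s) / 2"
  have sum12: "l1 + l2 = T" unfolding l1_def l2_def by (simp add: field_simps)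
  have prod12: "l1 * l2 = dP"
  proof -
    have "l1 * l2 = (T * T - s * s) / 4" unfolding l1_def l2_def by (simp add: field_simps)
    also have "\<dots> = dP" unfolding s(1) D_def by simp
    finally show ?thesis .
  qed
  have dPnz: "dP \<noteq> 0" and lcdP: "lc dP = (-1) ^ k * (-1) ^ S"
  proof -
    have a1: "(- tX) ^ k \<noteq> 0" "lc ((- tX) ^ k) = (-1) ^ k"
      using lc_pow[of "- tX" k] lc_mtX by auto
    have a2: "uX ^ S \<noteq> 0" "lc (uX ^ S) = (-1) ^ S"
      using lc_pow[of uX S] lc_uX by auto
    show "dP \<noteq> 0" unfolding hdP using a1 a2 by simp
    show "lc dP = (-1) ^ k * (-1) ^ S" unfolding hdP using a1 a2 by (simp add: lc_mult)
  qed
  have l12nz: "l1 \<noteq> 0" "l2 \<noteq> 0" using prod12 dPnz by (metis mult_zero_left, metis mult_zero_right)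
  have lcprod: "lc l1 * lc l2 = (-1) ^ k * (-1) ^ S"
    using lc_mult[OF l12nz] prod12 lcdP by simp
  have upow: "uX ^ S = (-1) ^ S * wX ^ S" by (rule power_minus)
  have E: "lc l1 = 1" if "even S"
  proof -
    have "uX ^ S = wX ^ S" using that upow by simp
    then have eq: "l1 - wX ^ S = ((T - uX ^ S) + (s - wX ^ S)) / 2"
      unfolding l1_def by (simp add: field_simps)
    have "bigO (int S - 1) (l1 - wX ^ S)"
      unfolding eq by (rule bigO_half[OF bigO_add[OF hT s(2)]])
    then show ?thesis using lead[of "int S" l1 "wX ^ S"] wpow_props[of S] by simp
  qed
  have O: "lc l2 = -1" if "odd S"
  proof -
    have "uX ^ S = - (wX ^ S)" using that upow by simp
    then have eq: "l2 - (- (wX ^ S)) = ((T - uX ^ S) - (s - wX ^ S)) / 2"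
      unfolding l2_def by (simp add: field_simps)
    have "bigO (int S - 1) (l2 - (- (wX ^ S)))"
      unfolding eq by (rule bigO_half[OF bigO_diff[OF hT s(2)]])
    then show ?thesis using lead[of "int S" l2 "- (wX ^ S)"] mwpow_props[of S] by simp
  qed
  define x1 where "x1 = z * l1"
  define x2 where "x2 = z * l2"
  have x1: "x1 \<noteq> 0" "lc x1 = lc l1" unfolding x1_def using z l12nz by (auto simp: lc_mult)
  have x2: "x2 \<noteq> 0" "lc x2 = lc l2" unfolding x2_def using z l12nz by (auto simp: lc_mult)
  have cpx: "char_poly (rho_E 1 beta) = [:- x1, 1:] * [:- x2, 1:]"
  proof -
    have 1: "z * l1 * (z * l2) = z * z * dP" unfolding prod12[symmetric] by (simp only: mult_ac)
    have 2: "z * l1 + z * l2 = z * T" unfolding sum12[symmetric] by (simp only: distrib_left)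
    show ?thesis unfolding cp lin_fac x1_def x2_def 1 2 ..
  qed
  have par2: "odd (int (a 1) - (\<Sum>i=2..k. int (a i))) \<longleftrightarrow> odd S"
  proof -
    have "(\<Sum>i=1..k. int (a i)) = int (a 1) + (\<Sum>i=Suc 1..k. int (a i))"
      using assms(1) by (rule sum.atLeast_Suc_atMost)
    then have "int S = int (a 1) + (\<Sum>i=2..k. int (a i))"
      unfolding S_def by (simp add: numeral_2_eq_2)
    then show ?thesis by presburger
  qed
  have par3: "odd (int k - (\<Sum>i=1..k. int (a i))) \<longleftrightarrow> odd (k + S)"
  proof -
    have "(\<Sum>i=1..k. int (a i)) = int S" unfolding S_def by simp
    then show ?thesis by presburger
  qed
  have key: "(even k \<and> even S \<longrightarrow> lc l1 > 0 \<and> lc l2 > 0)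
     \<and> (odd k \<and> odd S \<longrightarrow> lc l1 < 0 \<and> lc l2 < 0)
     \<and> (odd (k + S) \<longrightarrow> (lc l1 > 0 \<and> lc l2 < 0) \<or> (lc l1 < 0 \<and> lc l2 > 0))"
  proof (cases "even k"; cases "even S")
    assume "even k" "even S" then show ?thesis using E lcprod by auto
  next
    assume "even k" "odd S" then show ?thesis using O lcprod by auto
  next
    assume "odd k" "even S" then show ?thesis using E lcprod by auto
  next
    assume "odd k" "odd S" then show ?thesis using O lcprod by auto
  qed
  have "char_poly (rho_E 1 beta) = [:- x1, 1:] * [:- x2, 1:]
     \<and> (even k \<and> even (\<Sum>i=1..k. a i) \<longrightarrow> Q_pos x1 \<and> Q_pos x2)
     \<and> (odd k \<and> odd (int (a 1) - (\<Sum>i=2..k. int (a i))) \<longrightarrow> Q_neg x1 \<and> Q_neg x2)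
     \<and> (odd (int k - (\<Sum>i=1..k. int (a i))) \<longrightarrow>
          (Q_pos x1 \<and> Q_neg x2) \<or> (Q_neg x1 \<and> Q_pos x2))"
    using cpx key par2 par3 x1 x2 unfolding Q_pos_iff Q_neg_iff S_def[symmetric] by auto
  then show ?thesis by blast
qed

end
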